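(* For any $(2^{nR_1},2^{nR_2},n)$ code (with deterministic feedback encoders $x_{ki}=\phi_{ki}(w_k,z_k^{i-1})$) for the state-dependent discrete memoryless MAC with generalized feedback, with independent messages $W_1,W_2$, letting $Z_i=(Z_{1i},Z_{2i})$ and $Z^{i-1}=(Z_1,\dots,Z_{i-1})$, $$\sum_{i=1}^nI(X_{1i};X_{2i}\mid Z^{i-1})\le\sum_{i=1}^nI(X_{1i};X_{2i}\mid Z_i,Z^{i-1}).$$
   Context: Model: finite alphabets; states $S_i$ i.i.d. $\sim P_S$ independent of the messages; memoryless channel $P_{YZ_1Z_2|X_1X_2S}$ producing $(Y_i,Z_{1i},Z_{2i})$ from $(X_{1i},X_{2i},S_i)$; encoder $k$ maps its message $w_k$ and its past feedback $z_k^{i-1}=(z_{k1},\dots,z_{k,i-1})$ to $x_{ki}$. *)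

theory Defs
  imports "HOL-Probability.Probability"
begin

definition cmi :: "'o pmf \<Rightarrow> ('o \<Rightarrow> 'a) \<Rightarrow> ('o \<Rightarrow> 'b) \<Rightarrow> ('o \<Rightarrow> 'c) \<Rightarrow> real" where
  "cmi p X Y Z =
    (let pj  = pmf (map_pmf (\<lambda>\<omega>. (X \<omega>, Y \<omega>, Z \<omega>)) p);
         pz  = pmf (map_pmf Z p);
         pxz = pmf (map_pmf (\<lambda>\<omega>. (X \<omega>, Z \<omega>)) p);
         pyz = pmf (map_pmf (\<lambda>\<omega>. (Y \<omega>, Z \<omega>)) p)
     in (\<Sum>(x,y,z) \<in> (\<lambda>\<omega>. (X \<omega>, Y \<omega>, Z \<omega>)) ` set_pmf p.
           pj (x,y,z) * log 2 (pj (x,y,z) * pz z / (pxz (x,z) * pyz (y,z)))))"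

type_synonym ('x1,'x2,'s,'y,'z1,'z2) step = "'x1 \<times> 'x2 \<times> 's \<times> 'y \<times> 'z1 \<times> 'z2"

definition st_x1 :: "('x1,'x2,'s,'y,'z1,'z2) step \<Rightarrow> 'x1" where "st_x1 t = fst t"
definition st_x2 :: "('x1,'x2,'s,'y,'z1,'z2) step \<Rightarrow> 'x2" where "st_x2 t = fst (snd t)"
definition st_z1 :: "('x1,'x2,'s,'y,'z1,'z2) step \<Rightarrow> 'z1" where "st_z1 t = fst (snd (snd (snd (snd t))))"
definition st_z2 :: "('x1,'x2,'s,'y,'z1,'z2) step \<Rightarrow> 'z2" where "st_z2 t = snd (snd (snd (snd (snd t))))"

text \<open>Time indices are 0-based: at time i the encoder k uses its message and the
  list of its past feedback symbols z_k0..z_k(i-1).\<close>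
fun traj :: "'s pmf \<Rightarrow> ('x1 \<Rightarrow> 'x2 \<Rightarrow> 's \<Rightarrow> ('y \<times> 'z1 \<times> 'z2) pmf)
   \<Rightarrow> (nat \<Rightarrow> 'w1 \<Rightarrow> 'z1 list \<Rightarrow> 'x1) \<Rightarrow> (nat \<Rightarrow> 'w2 \<Rightarrow> 'z2 list \<Rightarrow> 'x2)
   \<Rightarrow> 'w1 \<Rightarrow> 'w2 \<Rightarrow> nat \<Rightarrow> ('x1,'x2,'s,'y,'z1,'z2) step list pmf" where
  "traj PS ch \<phi>1 \<phi>2 w1 w2 0 = return_pmf []"
| "traj PS ch \<phi>1 \<phi>2 w1 w2 (Suc k) =
     bind_pmf (traj PS ch \<phi>1 \<phi>2 w1 w2 k) (\<lambda>h.
     bind_pmf PS (\<lambda>s.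
       let x1 = \<phi>1 k w1 (map st_z1 h); x2 = \<phi>2 k w2 (map st_z2 h) in
       map_pmf (\<lambda>(y,z1,z2). h @ [(x1,x2,s,y,z1,z2)]) (ch x1 x2 s)))"

definition code_pmf :: "'w1 set \<Rightarrow> 'w2 set \<Rightarrow> 's pmf \<Rightarrow> ('x1 \<Rightarrow> 'x2 \<Rightarrow> 's \<Rightarrow> ('y \<times> 'z1 \<times> 'z2) pmf)
   \<Rightarrow> (nat \<Rightarrow> 'w1 \<Rightarrow> 'z1 list \<Rightarrow> 'x1) \<Rightarrow> (nat \<Rightarrow> 'w2 \<Rightarrow> 'z2 list \<Rightarrow> 'x2) \<Rightarrow> nat
   \<Rightarrow> ('w1 \<times> 'w2 \<times> ('x1,'x2,'s,'y,'z1,'z2) step list) pmf" where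
  "code_pmf W1 W2 PS ch \<phi>1 \<phi>2 n =
     bind_pmf (pmf_of_set W1) (\<lambda>w1. bind_pmf (pmf_of_set W2) (\<lambda>w2.
       map_pmf (\<lambda>h. (w1, w2, h)) (traj PS ch \<phi>1 \<phi>2 w1 w2 n)))"

definition rvX1 :: "nat \<Rightarrow> 'w1 \<times> 'w2 \<times> ('x1,'x2,'s,'y,'z1,'z2) step list \<Rightarrow> 'x1" where
  "rvX1 i \<omega> = st_x1 (snd (snd \<omega>) ! i)"
definition rvX2 :: "nat \<Rightarrow> 'w1 \<times> 'w2 \<times> ('x1,'x2,'s,'y,'z1,'z2) step list \<Rightarrow> 'x2" where
  "rvX2 i \<omega> = st_x2 (snd (snd \<omega>) ! i)"
definition rvZ :: "nat \<Rightarrow> 'w1 \<times> 'w2 \<times> ('x1,'x2,'s,'y,'z1,'z2) step list \<Rightarrow> 'z1 \<times> 'z2" where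
  "rvZ i \<omega> = (st_z1 (snd (snd \<omega>) ! i), st_z2 (snd (snd \<omega>) ! i))"
text \<open>Z^{i-1} in 1-based notation: the feedback pairs strictly before time i.\<close>
definition rvZpast :: "nat \<Rightarrow> 'w1 \<times> 'w2 \<times> ('x1,'x2,'s,'y,'z1,'z2) step list \<Rightarrow> ('z1 \<times> 'z2) list" where
  "rvZpast i \<omega> = map (\<lambda>t. (st_z1 t, st_z2 t)) (take i (snd (snd \<omega>)))"

end

theory Submission
  imports Defs
begin


lemma cmi_nonneg:
  fixes p :: "'o pmf"
  assumes fin: "finite (set_pmf p)"
  shows "0 \<le> cmi p X Y Z"
proof -
  define M where "M = restrict_space (measure_pmf p) (set_pmf p)"
  interpret information_space M 2
  proof -
    have "prob_space M" unfolding M_def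
      by (intro prob_space_restrict_space measure_pmf.emeasure_eq_1_AE) (auto simp: AE_measure_pmf_iff)
    then show "information_space M 2" by (simp add: information_space_def information_space_axioms_def)
  qed
  have sp: "space M = set_pmf p" by (simp add: M_def space_restrict_space)
  have sets: "sets M = Pow (set_pmf p)" by (auto simp: M_def sets_restrict_space)
  have meas: "\<And>A. measure M (A \<inter> space M) = measure_pmf.prob p A"
    unfolding M_def
    by (subst measure_restrict_space) (auto simp: space_restrict_space measure_Int_set_pmf)
  have sf: "simple_function M F" for F :: "'o \<Rightarrow> _"
    unfolding simple_function_def using fin by (auto simp: sp sets)
  have sd: "simple_distributed M F (pmf (map_pmf F p))" for F :: "'o \<Rightarrow> _"
    by (rule simple_distributedI[OF sf]) (auto simp: pmf_map meas)
  have "0 \<le> conditional_mutual_information 2 (count_space (X ` space M)) (count_space (Y ` space M)) (count_space (Z ` space M)) X Y Z" by (rule conditional_mutual_information_nonneg[OF sf sf sf])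
  also have "conditional_mutual_information 2 (count_space (X ` space M)) (count_space (Y ` space M)) (count_space (Z ` space M)) X Y Z = cmi p X Y Z"
    apply (subst conditional_mutual_information_eq[OF sd sd sd sd])
    unfolding cmi_def Let_def sp
    by (intro sum.cong refl) (auto simp: field_simps)
  finally show ?thesis .
qed


definition ent :: "'a pmf \<Rightarrow> real" where
  "ent r = - (\<Sum>x\<in>set_pmf r. pmf r x * log 2 (pmf r x))"

lemma marg:
  assumes "finite (set_pmf q)"
  shows "(\<Sum>a\<in>set_pmf q. pmf q a * g (f a)) = (\<Sum>b\<in>set_pmf (map_pmf f q). pmf (map_pmf f q) b * g b)"
proof -
  have fin2: "finite (set_pmf (map_pmf f q))" using assms by simp
  have "(\<Sum>a\<in>set_pmf q. pmf q a * g (f a)) = (LINT a|q. g (f a))"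
    by (subst integral_measure_pmf_real[OF assms]) (auto simp: mult.commute)
  also have "\<dots> = (LINT b|map_pmf f q. g b)" by simp
  also have "\<dots> = (\<Sum>b\<in>set_pmf (map_pmf f q). pmf (map_pmf f q) b * g b)"
    by (subst integral_measure_pmf_real[OF fin2]) (auto simp: mult.commute)
  finally show ?thesis .
qed

lemma pos_map: "x \<in> set_pmf p \<Longrightarrow> 0 < pmf (map_pmf f p) (f x)"
  by (simp add: pmf_positive)

lemma cmi_ent:
  assumes fin: "finite (set_pmf p)"
  shows "cmi p X Y Z = ent (map_pmf (\<lambda>\<omega>. (X \<omega>, Z \<omega>)) p) + ent (map_pmf (\<lambda>\<omega>. (Y \<omega>, Z \<omega>)) p)
           - ent (map_pmf (\<lambda>\<omega>. (X \<omega>, Y \<omega>, Z \<omega>)) p) - ent (map_pmf Z p)"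
proof -
  define J where "J = map_pmf (\<lambda>\<omega>. (X \<omega>, Y \<omega>, Z \<omega>)) p"
  have finJ: "finite (set_pmf J)" using fin by (simp add: J_def)
  have eZ: "map_pmf Z p = map_pmf (\<lambda>(x,y,z). z) J" by (simp add: J_def map_pmf_comp)
  have eXZ: "map_pmf (\<lambda>\<omega>. (X \<omega>, Z \<omega>)) p = map_pmf (\<lambda>(x,y,z). (x,z)) J" by (simp add: J_def map_pmf_comp)
  have eYZ: "map_pmf (\<lambda>\<omega>. (Y \<omega>, Z \<omega>)) p = map_pmf (\<lambda>(x,y,z). (y,z)) J" by (simp add: J_def map_pmf_comp)
  have img: "(\<lambda>\<omega>. (X \<omega>, Y \<omega>, Z \<omega>)) ` set_pmf p = set_pmf J" by (simp add: J_def)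
  let ?pz = "pmf (map_pmf (\<lambda>(x,y,z). z) J)"
  let ?pxz = "pmf (map_pmf (\<lambda>(x,y,z). (x,z)) J)"
  let ?pyz = "pmf (map_pmf (\<lambda>(x,y,z). (y,z)) J)"
  have "cmi p X Y Z = (\<Sum>t\<in>set_pmf J. pmf J t * log 2 (pmf J t * ?pz (snd (snd t)) / (?pxz (fst t, snd (snd t)) * ?pyz (fst (snd t), snd (snd t)))))"
    unfolding cmi_def Let_def img eZ eXZ eYZ J_def[symmetric] by (simp add: case_prod_beta)
  also have "\<dots> = (\<Sum>t\<in>set_pmf J. pmf J t * log 2 (pmf J t)) + (\<Sum>t\<in>set_pmf J. pmf J t * log 2 (?pz ((\<lambda>(x,y,z). z) t)))
      - (\<Sum>t\<in>set_pmf J. pmf J t * log 2 (?pxz ((\<lambda>(x,y,z). (x,z)) t))) - (\<Sum>t\<in>set_pmf J. pmf J t * log 2 (?pyz ((\<lambda>(x,y,z). (y,z)) t)))"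
  proof -
    have "pmf J t * log 2 (pmf J t * ?pz (snd (snd t)) / (?pxz (fst t, snd (snd t)) * ?pyz (fst (snd t), snd (snd t))))
       = pmf J t * log 2 (pmf J t) + pmf J t * log 2 (?pz ((\<lambda>(x,y,z). z) t))
         - pmf J t * log 2 (?pxz ((\<lambda>(x,y,z). (x,z)) t)) - pmf J t * log 2 (?pyz ((\<lambda>(x,y,z). (y,z)) t))"
      if t: "t \<in> set_pmf J" for t
    proof -
      have a: "0 < pmf J t" using t by (simp add: pmf_positive)
      have b: "0 < ?pz ((\<lambda>(x,y,z). z) t)" by (rule pos_map[OF t])
      have c: "0 < ?pxz ((\<lambda>(x,y,z). (x,z)) t)" by (rule pos_map[OF t])
      have d: "0 < ?pyz ((\<lambda>(x,y,z). (y,z)) t)" by (rule pos_map[OF t])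
      obtain x y z where tt: "t = (x,y,z)" by (cases t) auto
      show ?thesis using a b c d unfolding tt
        by (simp add: log_mult log_divide algebra_simps)
    qed
    then show ?thesis by (simp add: sum_subtractf sum.distrib)
  qed
  also have "\<dots> = - ent J + (- ent (map_pmf (\<lambda>(x,y,z). z) J)) - (- ent (map_pmf (\<lambda>(x,y,z). (x,z)) J))
      - (- ent (map_pmf (\<lambda>(x,y,z). (y,z)) J))"
    unfolding ent_def minus_minus
    by (simp only: marg[OF finJ, of "\<lambda>v. log 2 (?pz v)" "\<lambda>(x,y,z). z"]
        marg[OF finJ, of "\<lambda>v. log 2 (?pxz v)" "\<lambda>(x,y,z). (x,z)"]
        marg[OF finJ, of "\<lambda>v. log 2 (?pyz v)" "\<lambda>(x,y,z). (y,z)"])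
  finally show ?thesis by (simp add: eZ eXZ eYZ J_def)
qed



lemma ent_inj: assumes "inj_on f (set_pmf r)" shows "ent (map_pmf f r) = ent r"
  unfolding ent_def using assms by (simp add: sum.reindex pmf_map_inj)

lemma pmf_bind_pair:
  "pmf (bind_pmf q (\<lambda>a. map_pmf (Pair a) (K a))) (a, d) = pmf q a * pmf (K a) d"
proof -
  have "pmf (map_pmf (Pair a') (K a')) (a, d) = (if a' = a then pmf (K a) d else 0)" for a'
  proof (cases "a' = a")
    case True then show ?thesis by (simp add: pmf_map_inj' inj_on_def)
  next
    case False
    then have "(a, d) \<notin> set_pmf (map_pmf (Pair a') (K a'))" by auto
    then show ?thesis using False by (simp add: set_pmf_eq)
  qed
  then have "pmf (bind_pmf q (\<lambda>a. map_pmf (Pair a) (K a))) (a, d) = (LINT a'|q. (if a' = a then pmf (K a) d else 0))"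
    by (simp add: pmf_bind)
  also have "\<dots> = pmf q a * pmf (K a) d"
    by (subst integral_measure_pmf_real[where A="{a}"]) (auto split: if_splits)
  finally show ?thesis .
qed

lemma ent_chain:
  assumes fq: "finite (set_pmf q)" and fK: "\<And>a. a \<in> set_pmf q \<Longrightarrow> finite (set_pmf (K a))"
  shows "ent (bind_pmf q (\<lambda>a. map_pmf (Pair a) (K a))) = ent q + (\<Sum>a\<in>set_pmf q. pmf q a * ent (K a))"
proof -
  let ?J = "bind_pmf q (\<lambda>a. map_pmf (Pair a) (K a))"
  have sJ: "set_pmf ?J = Sigma (set_pmf q) (\<lambda>a. set_pmf (K a))" by auto
  have inner: "(\<Sum>d\<in>set_pmf (K a). pmf q a * pmf (K a) d * log 2 (pmf q a * pmf (K a) d))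
      = pmf q a * log 2 (pmf q a) - pmf q a * ent (K a)" if a: "a \<in> set_pmf q" for a
  proof -
    have qa: "0 < pmf q a" using a by (simp add: pmf_positive)
    have "(\<Sum>d\<in>set_pmf (K a). pmf q a * pmf (K a) d * log 2 (pmf q a * pmf (K a) d))
       = (\<Sum>d\<in>set_pmf (K a). pmf q a * log 2 (pmf q a) * pmf (K a) d + pmf q a * (pmf (K a) d * log 2 (pmf (K a) d)))"
      using qa by (intro sum.cong refl) (auto simp: log_mult pmf_positive algebra_simps)
    also have "\<dots> = pmf q a * log 2 (pmf q a) * (\<Sum>d\<in>set_pmf (K a). pmf (K a) d) + pmf q a * (\<Sum>d\<in>set_pmf (K a). pmf (K a) d * log 2 (pmf (K a) d))"
      by (simp add: sum.distrib sum_distrib_left)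
    also have "(\<Sum>d\<in>set_pmf (K a). pmf (K a) d) = 1" using fK[OF a] by (simp add: sum_pmf_eq_1)
    finally show ?thesis by (simp add: ent_def)
  qed
  have "ent ?J = - (\<Sum>(a,d)\<in>Sigma (set_pmf q) (\<lambda>a. set_pmf (K a)). pmf q a * pmf (K a) d * log 2 (pmf q a * pmf (K a) d))"
    unfolding ent_def sJ by (intro arg_cong[where f=uminus] sum.cong refl) (auto simp: pmf_bind_pair)
  also have "\<dots> = - (\<Sum>a\<in>set_pmf q. \<Sum>d\<in>set_pmf (K a). pmf q a * pmf (K a) d * log 2 (pmf q a * pmf (K a) d))"
    using fq fK by (subst sum.Sigma) auto
  also have "\<dots> = - (\<Sum>a\<in>set_pmf q. pmf q a * log 2 (pmf q a) - pmf q a * ent (K a))"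
    by (simp add: inner)
  also have "\<dots> = ent q + (\<Sum>a\<in>set_pmf q. pmf q a * ent (K a))"
    by (simp add: ent_def sum_subtractf sum.distrib sum_negf)
  finally show ?thesis .
qed



lemma traj_fin:
  fixes PS :: "'s::finite pmf"
    and ch :: "'x1 \<Rightarrow> 'x2 \<Rightarrow> 's \<Rightarrow> ('y::finite \<times> 'z1::finite \<times> 'z2::finite) pmf"
  shows "finite (set_pmf (traj PS ch \<phi>1 \<phi>2 w1 w2 k))"
proof (induction k)
  case 0 then show ?case by simp
next
  case (Suc k)
  show ?case using Suc by (simp add: Let_def)
qed

lemma traj_supp:
  "h \<in> set_pmf (traj PS ch \<phi>1 \<phi>2 w1 w2 k) \<Longrightarrow> length h = k \<and>
     (\<forall>i<k. st_x1 (h!i) = \<phi>1 i w1 (map st_z1 (take i h)) \<and> st_x2 (h!i) = \<phi>2 i w2 (map st_z2 (take i h)))"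
proof (induction k arbitrary: h)
  case 0 then show ?case by simp
next
  case (Suc k)
  from Suc.prems obtain h0 s y z1 z2 where h0: "h0 \<in> set_pmf (traj PS ch \<phi>1 \<phi>2 w1 w2 k)"
    and h: "h = h0 @ [(\<phi>1 k w1 (map st_z1 h0), \<phi>2 k w2 (map st_z2 h0), s, y, z1, z2)]"
    by (auto simp: Let_def)
  from Suc.IH[OF h0] have IH: "length h0 = k"
    "\<And>i. i<k \<Longrightarrow> st_x1 (h0!i) = \<phi>1 i w1 (map st_z1 (take i h0)) \<and> st_x2 (h0!i) = \<phi>2 i w2 (map st_z2 (take i h0))"
    by auto
  show ?case
  proof (intro conjI allI impI; (elim conjE)?)
    show "length h = Suc k" using IH by (simp add: h)
  next
    fix i assume i: "i < Suc k"
    have "st_x1 (h!i) = \<phi>1 i w1 (map st_z1 (take i h)) \<and> st_x2 (h!i) = \<phi>2 i w2 (map st_z2 (take i h))"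
    proof (cases "i < k")
      case True then show ?thesis using IH by (simp add: h nth_append)
    next
      case False then have "i = k" using i by simp
      then show ?thesis using IH by (simp add: h nth_append st_x1_def st_x2_def)
    qed
    then show "st_x1 (h!i) = \<phi>1 i w1 (map st_z1 (take i h))" "st_x2 (h!i) = \<phi>2 i w2 (map st_z2 (take i h))" by auto
  qed
qed

lemma traj_take:
  "k \<le> m \<Longrightarrow> map_pmf (take k) (traj PS ch \<phi>1 \<phi>2 w1 w2 m) = traj PS ch \<phi>1 \<phi>2 w1 w2 k"
proof (induction m)
  case 0 then show ?case by simp
next
  case (Suc m)
  show ?case
  proof (cases "k = Suc m")
    case True
    have "map_pmf (take k) (traj PS ch \<phi>1 \<phi>2 w1 w2 (Suc m)) = map_pmf id (traj PS ch \<phi>1 \<phi>2 w1 w2 (Suc m))"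
      using traj_supp[of _ PS ch \<phi>1 \<phi>2 w1 w2 "Suc m"] True by (intro map_pmf_cong) auto
    then show ?thesis using True by (simp add: map_pmf_id)
  next
    case False
    then have k: "k \<le> m" using Suc.prems by simp
    have "map_pmf (take k) (traj PS ch \<phi>1 \<phi>2 w1 w2 (Suc m)) = map_pmf (take k) (traj PS ch \<phi>1 \<phi>2 w1 w2 m)"
      unfolding traj.simps map_bind_pmf map_pmf_comp
      apply (subst bind_pmf_cong[OF refl, where g="\<lambda>h. bind_pmf PS (\<lambda>s. return_pmf (take k h))"])
      subgoal for h
        using traj_supp[of h PS ch \<phi>1 \<phi>2 w1 w2 m] k
        by (auto simp: Let_def map_bind_pmf map_pmf_comp split_beta intro!: bind_pmf_cong)
      apply (simp add: bind_pmf_const map_pmf_def[symmetric])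
      done
    then show ?thesis using Suc.IH k by simp
  qed
qed



lemma ent_partition:
  assumes "\<And>\<omega> \<omega>'. \<omega> \<in> set_pmf p \<Longrightarrow> \<omega>' \<in> set_pmf p \<Longrightarrow> (F \<omega> = F \<omega>') = (G \<omega> = G \<omega>')"
  shows "ent (map_pmf F p) = ent (map_pmf G p)"
proof -
  define f where "f v = G (SOME \<omega>. \<omega> \<in> set_pmf p \<and> F \<omega> = v)" for v
  have fF: "f (F \<omega>) = G \<omega>" if "\<omega> \<in> set_pmf p" for \<omega>
  proof -
    have "\<exists>\<omega>'. \<omega>' \<in> set_pmf p \<and> F \<omega>' = F \<omega>" using that by blast
    from someI_ex[OF this] have "(SOME \<omega>'. \<omega>' \<in> set_pmf p \<and> F \<omega>' = F \<omega>) \<in> set_pmf p \<and> F (SOME \<omega>'. \<omega>' \<in> set_pmf p \<and> F \<omega>' = F \<omega>) = F \<omega>" .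
    then show ?thesis using assms that unfolding f_def by blast
  qed
  have "map_pmf G p = map_pmf f (map_pmf F p)"
    by (simp add: map_pmf_comp fF cong: map_pmf_cong)
  moreover have "inj_on f (set_pmf (map_pmf F p))"
    by (auto simp: inj_on_def fF assms)
  ultimately show ?thesis by (simp add: ent_inj)
qed

lemma ent_return[simp]: "ent (return_pmf x) = 0"
  by (simp add: ent_def)

lemma markov_gen:
  assumes fq: "finite (set_pmf q)" and fL: "\<And>b. finite (set_pmf (L b))"
  shows "ent (bind_pmf q (\<lambda>a. map_pmf (Pair a) (L (h a)))) - ent q
       = ent (map_pmf (\<lambda>(a,d). (h a, d)) (bind_pmf q (\<lambda>a. map_pmf (Pair a) (L (h a))))) - ent (map_pmf h q)"
proof -
  have eq: "map_pmf (\<lambda>(a,d). (h a, d)) (bind_pmf q (\<lambda>a. map_pmf (Pair a) (L (h a))))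
      = bind_pmf (map_pmf h q) (\<lambda>b. map_pmf (Pair b) (L b))"
    by (simp add: map_bind_pmf bind_map_pmf map_pmf_comp)
  have fq': "finite (set_pmf (map_pmf h q))" using fq by simp
  show ?thesis
    unfolding eq ent_chain[OF fq fL] ent_chain[OF fq' fL]
    using marg[OF fq, of "\<lambda>b. ent (L b)" h] by simp
qed



lemma code_fin:
  fixes PS :: "'s::finite pmf"
    and ch :: "'x1 \<Rightarrow> 'x2 \<Rightarrow> 's \<Rightarrow> ('y::finite \<times> 'z1::finite \<times> 'z2::finite) pmf"
  assumes "finite W1" "W1 \<noteq> {}" "finite W2" "W2 \<noteq> {}"
  shows "finite (set_pmf (code_pmf W1 W2 PS ch \<phi>1 \<phi>2 n))"
  using assms by (simp add: code_pmf_def traj_fin)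

lemma code_supp:
  assumes "finite W1" "W1 \<noteq> {}" "finite W2" "W2 \<noteq> {}"
    and "\<omega> \<in> set_pmf (code_pmf W1 W2 PS ch \<phi>1 \<phi>2 n)"
  shows "fst \<omega> \<in> W1 \<and> fst (snd \<omega>) \<in> W2 \<and> snd (snd \<omega>) \<in> set_pmf (traj PS ch \<phi>1 \<phi>2 (fst \<omega>) (fst (snd \<omega>)) n)"
  using assms by (auto simp: code_pmf_def)

lemma code_take:
  assumes "k \<le> n"
  shows "map_pmf (\<lambda>(w1,w2,h). (w1,w2,take k h)) (code_pmf W1 W2 PS ch \<phi>1 \<phi>2 n) = code_pmf W1 W2 PS ch \<phi>1 \<phi>2 k"
  unfolding code_pmf_def map_bind_pmf map_pmf_comp
  by (intro bind_pmf_cong refl) (simp add: traj_take[OF assms, symmetric] map_pmf_comp)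

definition Kn where "Kn PS ch x1 x2 = bind_pmf PS (\<lambda>s. map_pmf (\<lambda>(y,z1,z2). (z1,z2)) (ch x1 x2 s))"

lemma markov_inst:
  assumes W: "finite W1" "W1 \<noteq> {}" "finite W2" "W2 \<noteq> {}" and i: "i < n"
  shows "map_pmf (\<lambda>\<omega>. ((fst \<omega>, fst (snd \<omega>), rvZpast i \<omega>), rvZ i \<omega>)) (code_pmf W1 W2 PS ch \<phi>1 \<phi>2 n)
    = bind_pmf (map_pmf (\<lambda>\<omega>. (fst \<omega>, fst (snd \<omega>), rvZpast i \<omega>)) (code_pmf W1 W2 PS ch \<phi>1 \<phi>2 n))
        (\<lambda>a. map_pmf (Pair a) ((\<lambda>((x1,x2),c). Kn PS ch x1 x2)
              ((\<lambda>(w1,w2,c). ((\<phi>1 i w1 (map fst c), \<phi>2 i w2 (map snd c)), c)) a)))"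
proof -
  let ?P = "\<lambda>k. code_pmf W1 W2 PS ch \<phi>1 \<phi>2 k"
  have L: "map_pmf (\<lambda>\<omega>. ((fst \<omega>, fst (snd \<omega>), rvZpast i \<omega>), rvZ i \<omega>)) (?P n)
      = map_pmf (\<lambda>\<omega>. ((fst \<omega>, fst (snd \<omega>), rvZpast i \<omega>), rvZ i \<omega>)) (?P (Suc i))"
    unfolding code_take[OF Suc_leI[OF i], symmetric] map_pmf_comp
    by (intro map_pmf_cong refl) (auto simp: rvZpast_def rvZ_def)
  have R: "map_pmf (\<lambda>\<omega>. (fst \<omega>, fst (snd \<omega>), rvZpast i \<omega>)) (?P n)
      = map_pmf (\<lambda>\<omega>. (fst \<omega>, fst (snd \<omega>), rvZpast i \<omega>)) (?P i)"
    unfolding code_take[OF less_imp_le[OF i], symmetric] map_pmf_comp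
    by (intro map_pmf_cong refl) (auto simp: rvZpast_def)
  show ?thesis
    unfolding L R
    unfolding code_pmf_def traj.simps map_bind_pmf bind_map_pmf map_pmf_comp bind_assoc_pmf
    apply (intro bind_pmf_cong refl)
    subgoal for w1 w2 h
      using traj_supp[of h PS ch \<phi>1 \<phi>2 w1 w2 i]
      apply (simp add: Let_def map_bind_pmf bind_map_pmf map_pmf_comp Kn_def split_beta rvZpast_def rvZ_def o_def nth_append st_z1_def[abs_def] st_z2_def[abs_def])
      done
    done
qed



lemma supp_facts:
  assumes W: "finite W1" "W1 \<noteq> {}" "finite W2" "W2 \<noteq> {}" and i: "i < n"
    and om: "\<omega> \<in> set_pmf (code_pmf W1 W2 PS ch \<phi>1 \<phi>2 n)"
  shows "rvZpast (Suc i) \<omega> = rvZpast i \<omega> @ [rvZ i \<omega>] \<and> length (rvZpast i \<omega>) = i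
    \<and> rvX1 i \<omega> = \<phi>1 i (fst \<omega>) (map fst (rvZpast i \<omega>))
    \<and> rvX2 i \<omega> = \<phi>2 i (fst (snd \<omega>)) (map snd (rvZpast i \<omega>))"
proof -
  obtain w1 w2 h where o: "\<omega> = (w1, w2, h)" by (cases \<omega>) auto
  have h: "h \<in> set_pmf (traj PS ch \<phi>1 \<phi>2 w1 w2 n)" using code_supp[OF W om] o by simp
  note T = traj_supp[OF h]
  show ?thesis using T i unfolding o
    by (auto simp: rvZpast_def rvZ_def rvX1_def rvX2_def take_Suc_conv_app_nth o_def)
qed

lemma step_ineq:
  fixes PS :: "'s::finite pmf"
    and ch :: "'x1::finite \<Rightarrow> 'x2::finite \<Rightarrow> 's \<Rightarrow> ('y::finite \<times> 'z1::finite \<times> 'z2::finite) pmf"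
    and \<phi>1 :: "nat \<Rightarrow> 'w1 \<Rightarrow> 'z1 list \<Rightarrow> 'x1"
    and \<phi>2 :: "nat \<Rightarrow> 'w2 \<Rightarrow> 'z2 list \<Rightarrow> 'x2"
  assumes W: "finite W1" "W1 \<noteq> {}" "finite W2" "W2 \<noteq> {}" and i: "i < n"
  defines "P \<equiv> code_pmf W1 W2 PS ch \<phi>1 \<phi>2 n"
  shows "cmi P fst (\<lambda>\<omega>. fst (snd \<omega>)) (rvZpast (Suc i)) - cmi P fst (\<lambda>\<omega>. fst (snd \<omega>)) (rvZpast i)
     \<le> cmi P (rvX1 i) (rvX2 i) (\<lambda>\<omega>. (rvZ i \<omega>, rvZpast i \<omega>)) - cmi P (rvX1 i) (rvX2 i) (rvZpast i)"
proof -
  have fin: "finite (set_pmf P)" unfolding P_def by (rule code_fin[OF W])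
  have S: "rvZpast (Suc i) \<omega> = rvZpast i \<omega> @ [rvZ i \<omega>] \<and> length (rvZpast i \<omega>) = i
    \<and> rvX1 i \<omega> = \<phi>1 i (fst \<omega>) (map fst (rvZpast i \<omega>))
    \<and> rvX2 i \<omega> = \<phi>2 i (fst (snd \<omega>)) (map snd (rvZpast i \<omega>))" if "\<omega> \<in> set_pmf P" for \<omega>
    using supp_facts[OF W i that[unfolded P_def]] .
  let ?C = "rvZpast i" and ?C' = "rvZpast (Suc i)" and ?D = "rvZ i"
  let ?X1 = "rvX1 i" and ?X2 = "rvX2 i"
  let ?H = "\<lambda>F. ent (map_pmf F P)"
  note E = cmi_ent[OF fin]
  let ?A = "\<lambda>\<omega>. (fst \<omega>, fst (snd \<omega>), rvZpast i \<omega>)"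
  let ?h = "\<lambda>(w1,w2,c). ((\<phi>1 i w1 (map fst c), \<phi>2 i w2 (map snd c)), c)"
  let ?L = "\<lambda>((x1,x2),c). Kn PS ch x1 x2"
  have fq: "finite (set_pmf (map_pmf ?A P))" using fin by simp
  have fL: "finite (set_pmf (?L b))" for b :: "('x1 \<times> 'x2) \<times> ('z1 \<times> 'z2) list" by simp
  have MI: "map_pmf (\<lambda>\<omega>. (?A \<omega>, ?D \<omega>)) P = bind_pmf (map_pmf ?A P) (\<lambda>a. map_pmf (Pair a) (?L (?h a)))"
    unfolding P_def by (rule markov_inst[OF W i])
  have M0: "ent (map_pmf (\<lambda>\<omega>. (?A \<omega>, ?D \<omega>)) P) - ent (map_pmf ?A P)
     = ent (map_pmf (\<lambda>(a,d). (?h a, d)) (map_pmf (\<lambda>\<omega>. (?A \<omega>, ?D \<omega>)) P)) - ent (map_pmf ?h (map_pmf ?A P))"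
    unfolding MI by (rule markov_gen[OF fq fL])
  have p1: "?H (\<lambda>\<omega>. (?A \<omega>, ?D \<omega>)) = ?H (\<lambda>\<omega>. (fst \<omega>, fst (snd \<omega>), ?C' \<omega>))"
    apply (rule ent_partition) subgoal for \<omega> \<omega>' using S[of \<omega>] S[of \<omega>'] by auto done
  have p2: "ent (map_pmf (\<lambda>(a,d). (?h a, d)) (map_pmf (\<lambda>\<omega>. (?A \<omega>, ?D \<omega>)) P)) = ?H (\<lambda>\<omega>. (?X1 \<omega>, ?X2 \<omega>, (?D \<omega>, ?C \<omega>)))"
    unfolding map_pmf_comp apply (rule ent_partition) subgoal for \<omega> \<omega>' using S[of \<omega>] S[of \<omega>'] by auto done
  have p3: "ent (map_pmf ?h (map_pmf ?A P)) = ?H (\<lambda>\<omega>. (?X1 \<omega>, ?X2 \<omega>, ?C \<omega>))"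
    unfolding map_pmf_comp apply (rule ent_partition) subgoal for \<omega> \<omega>' using S[of \<omega>] S[of \<omega>'] by auto done
  have M: "?H (\<lambda>\<omega>. (fst \<omega>, fst (snd \<omega>), ?C' \<omega>)) - ?H (\<lambda>\<omega>. (fst \<omega>, fst (snd \<omega>), ?C \<omega>))
     = ?H (\<lambda>\<omega>. (?X1 \<omega>, ?X2 \<omega>, (?D \<omega>, ?C \<omega>))) - ?H (\<lambda>\<omega>. (?X1 \<omega>, ?X2 \<omega>, ?C \<omega>))"
    using M0 p1 p2 p3 by simp
  have DP1: "0 \<le> cmi P fst ?D (\<lambda>\<omega>. (?X1 \<omega>, ?C \<omega>))" by (rule cmi_nonneg[OF fin])
  have DP2: "0 \<le> cmi P (\<lambda>\<omega>. fst (snd \<omega>)) ?D (\<lambda>\<omega>. (?X2 \<omega>, ?C \<omega>))" by (rule cmi_nonneg[OF fin])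
  have q1: "?H (\<lambda>\<omega>. (fst \<omega>, (?X1 \<omega>, ?C \<omega>))) = ?H (\<lambda>\<omega>. (fst \<omega>, ?C \<omega>))"
    apply (rule ent_partition) subgoal for \<omega> \<omega>' using S[of \<omega>] S[of \<omega>'] by auto done
  have q2: "?H (\<lambda>\<omega>. (?D \<omega>, (?X1 \<omega>, ?C \<omega>))) = ?H (\<lambda>\<omega>. (?X1 \<omega>, (?D \<omega>, ?C \<omega>)))"
    apply (rule ent_partition) subgoal for \<omega> \<omega>' using S[of \<omega>] S[of \<omega>'] by auto done
  have q3: "?H (\<lambda>\<omega>. (fst \<omega>, ?D \<omega>, (?X1 \<omega>, ?C \<omega>))) = ?H (\<lambda>\<omega>. (fst \<omega>, ?C' \<omega>))"
    apply (rule ent_partition) subgoal for \<omega> \<omega>' using S[of \<omega>] S[of \<omega>'] by auto done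
  have r1: "?H (\<lambda>\<omega>. (fst (snd \<omega>), (?X2 \<omega>, ?C \<omega>))) = ?H (\<lambda>\<omega>. (fst (snd \<omega>), ?C \<omega>))"
    apply (rule ent_partition) subgoal for \<omega> \<omega>' using S[of \<omega>] S[of \<omega>'] by auto done
  have r2: "?H (\<lambda>\<omega>. (?D \<omega>, (?X2 \<omega>, ?C \<omega>))) = ?H (\<lambda>\<omega>. (?X2 \<omega>, (?D \<omega>, ?C \<omega>)))"
    apply (rule ent_partition) subgoal for \<omega> \<omega>' using S[of \<omega>] S[of \<omega>'] by auto done
  have r3: "?H (\<lambda>\<omega>. (fst (snd \<omega>), ?D \<omega>, (?X2 \<omega>, ?C \<omega>))) = ?H (\<lambda>\<omega>. (fst (snd \<omega>), ?C' \<omega>))"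
    apply (rule ent_partition) subgoal for \<omega> \<omega>' using S[of \<omega>] S[of \<omega>'] by auto done
  have z: "?H ?C' = ?H (\<lambda>\<omega>. (?D \<omega>, ?C \<omega>))"
    apply (rule ent_partition) subgoal for \<omega> \<omega>' using S[of \<omega>] S[of \<omega>'] by auto done
  show ?thesis
    using DP1 DP2 M z unfolding E q1 q2 q3 r1 r2 r3 by linarith
qed



lemma a0:
  fixes PS ch \<phi>1 \<phi>2 n
  assumes W: "finite W1" "W1 \<noteq> {}" "finite W2" "W2 \<noteq> {}"
  defines "P \<equiv> code_pmf W1 W2 PS ch \<phi>1 \<phi>2 n"
  assumes fin: "finite (set_pmf P)"
  shows "cmi P fst (\<lambda>\<omega>. fst (snd \<omega>)) (rvZpast 0) = 0"
proof -
  let ?U1 = "pmf_of_set W1" and ?U2 = "pmf_of_set W2"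
  have z: "rvZpast 0 = (\<lambda>_. [])" by (auto simp: rvZpast_def)
  have e1: "ent (map_pmf (\<lambda>\<omega>. (fst \<omega>, rvZpast 0 \<omega>)) P) = ent (map_pmf fst P)"
    by (rule ent_partition) (simp add: z)
  have e2: "ent (map_pmf (\<lambda>\<omega>. (fst (snd \<omega>), rvZpast 0 \<omega>)) P) = ent (map_pmf (\<lambda>\<omega>. fst (snd \<omega>)) P)"
    by (rule ent_partition) (simp add: z)
  have e3: "ent (map_pmf (\<lambda>\<omega>. (fst \<omega>, fst (snd \<omega>), rvZpast 0 \<omega>)) P) = ent (map_pmf (\<lambda>\<omega>. (fst \<omega>, fst (snd \<omega>))) P)"
    by (rule ent_partition) (simp add: z)
  have m1: "map_pmf fst P = ?U1"
    by (simp add: P_def code_pmf_def map_bind_pmf map_pmf_comp bind_pmf_const bind_return_pmf')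
  have m2: "map_pmf (\<lambda>\<omega>. fst (snd \<omega>)) P = ?U2"
    by (simp add: P_def code_pmf_def map_bind_pmf map_pmf_comp bind_pmf_const bind_return_pmf')
  have m3: "map_pmf (\<lambda>\<omega>. (fst \<omega>, fst (snd \<omega>))) P = bind_pmf ?U1 (\<lambda>a. map_pmf (Pair a) ?U2)"
  proof -
    have "map_pmf (\<lambda>\<omega>. (fst \<omega>, fst (snd \<omega>))) P = bind_pmf ?U1 (\<lambda>a. bind_pmf ?U2 (\<lambda>b. return_pmf (a, b)))"
      by (simp add: P_def code_pmf_def map_bind_pmf map_pmf_comp)
    also have "\<dots> = bind_pmf ?U1 (\<lambda>a. map_pmf (Pair a) ?U2)"
      by (simp add: map_pmf_def)
    finally show ?thesis .
  qed
  have fU1: "finite (set_pmf ?U1)" using W by simp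
  have fU2: "finite (set_pmf ?U2)" using W by simp
  have s1: "(\<Sum>a\<in>set_pmf ?U1. pmf ?U1 a) = 1" using fU1 by (simp add: sum_pmf_eq_1)
  have "ent (map_pmf (\<lambda>\<omega>. (fst \<omega>, fst (snd \<omega>))) P) = ent ?U1 + ent ?U2"
    unfolding m3 ent_chain[OF fU1 fU2] by (simp add: sum_distrib_right[symmetric] s1)
  then show ?thesis
    unfolding cmi_ent[OF fin] e1 e2 e3 m1 m2 by (simp add: z)
qed

theorem mainTheorem4:
  fixes W1 :: "'w1 set" and W2 :: "'w2 set"
    and PS :: "'s::finite pmf"
    and ch :: "'x1::finite \<Rightarrow> 'x2::finite \<Rightarrow> 's \<Rightarrow> ('y::finite \<times> 'z1::finite \<times> 'z2::finite) pmf"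
    and \<phi>1 :: "nat \<Rightarrow> 'w1 \<Rightarrow> 'z1 list \<Rightarrow> 'x1"
    and \<phi>2 :: "nat \<Rightarrow> 'w2 \<Rightarrow> 'z2 list \<Rightarrow> 'x2"
    and n :: nat
  assumes "finite W1" "W1 \<noteq> {}" "finite W2" "W2 \<noteq> {}"
  defines "P \<equiv> code_pmf W1 W2 PS ch \<phi>1 \<phi>2 n"
  shows "(\<Sum>i<n. cmi P (rvX1 i) (rvX2 i) (rvZpast i))
           \<le> (\<Sum>i<n. cmi P (rvX1 i) (rvX2 i) (\<lambda>\<omega>. (rvZ i \<omega>, rvZpast i \<omega>)))"
proof -
  note W = assms(1-4)
  have fin: "finite (set_pmf P)" unfolding P_def by (rule code_fin[OF W])
  define a where "a k = cmi P fst (\<lambda>\<omega>. fst (snd \<omega>)) (rvZpast k)" for k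
  have "a n - a 0 = (\<Sum>i<n. a (Suc i) - a i)" by (simp add: sum_lessThan_telescope)
  also have "\<dots> \<le> (\<Sum>i<n. cmi P (rvX1 i) (rvX2 i) (\<lambda>\<omega>. (rvZ i \<omega>, rvZpast i \<omega>)) - cmi P (rvX1 i) (rvX2 i) (rvZpast i))"
    by (intro sum_mono) (simp add: a_def P_def step_ineq[OF W])
  finally have "a n - a 0 \<le> \<dots>" .
  moreover have "a 0 = 0" unfolding a_def P_def by (rule a0[OF W fin[unfolded P_def]])
  moreover have "0 \<le> a n" unfolding a_def by (rule cmi_nonneg[OF fin])
  ultimately show ?thesis by (simp add: sum_subtractf)
qed


end
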